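(* Let $I=\{i_1<i_2<\dots<i_\ell\}$ be a nonempty finite set of positive integers with $m=i_\ell$. For $1\le k\le \ell$ define $$I_k=\{i_1,\dots,i_{k-1},\,i_k-1,\dots,i_\ell-1\}\setminus\{0\},\qquad \hat I_k=\{i_1,\dots,i_{k-1},\,i_{k+1}-1,\dots,i_\ell-1\},$$ let $I'=\{i_k\in I\mid i_k-1\notin I\}$ and $I''=I'\setminus\{1\}$. Then for all integers $n>m$, $$d(I;n+1)=d(I;n)+\sum_{k:\, i_k\in I''} d(I_k;n)+\sum_{k:\, i_k\in I'} d(\hat I_k;n).$$
   Context: For a permutation $\pi=\pi_1\cdots\pi_n$ of $[n]$, $\mathrm{Des}\,\pi=\{i\mid \pi_i>\pi_{i+1}\}$. For a finite set $J$ of positive integers and $n>\max(J\cup\{0\})$, $d(J;n)=\#\{\pi\in\mathfrak S_n\mid \mathrm{Des}\,\pi=J\}$. *)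

theory Defs
  imports "HOL-Combinatorics.Permutations"
begin

definition Des :: "nat \<Rightarrow> (nat \<Rightarrow> nat) \<Rightarrow> nat set" where
  "Des n \<pi> = {i. 1 \<le> i \<and> i < n \<and> \<pi> i > \<pi> (Suc i)}"

definition d :: "nat set \<Rightarrow> nat \<Rightarrow> nat" where
  "d J n = card {\<pi>. \<pi> permutes {1..n} \<and> Des n \<pi> = J}"

text \<open>For x = i_k in I: I_k and hat I_k, indexed by the element i_k itself.\<close>

definition Ik :: "nat set \<Rightarrow> nat \<Rightarrow> nat set" where
  "Ik I x = ({y \<in> I. y < x} \<union> {y - 1 | y. y \<in> I \<and> x \<le> y}) - {0}"

definition Ik_hat :: "nat set \<Rightarrow> nat \<Rightarrow> nat set" where
  "Ik_hat I x = {y \<in> I. y < x} \<union> {y - 1 | y. y \<in> I \<and> x < y}"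

definition I' :: "nat set \<Rightarrow> nat set" where
  "I' I = {x \<in> I. x - 1 \<notin> I}"

definition I'' :: "nat set \<Rightarrow> nat set" where
  "I'' I = I' I - {1}"

end

theory Submission
  imports Defs
begin

lemma perm_of_inj:
  assumes "finite S" "\<And>x. x \<notin> S \<Longrightarrow> f x = x" "f ` S \<subseteq> S" "inj_on f S"
  shows "f permutes S"
  using assms endo_inj_surj[of S f] by (intro bij_imp_permutes) (auto simp: bij_betw_def)

definition delj :: "nat \<Rightarrow> nat \<Rightarrow> (nat \<Rightarrow> nat) \<Rightarrow> nat \<Rightarrow> nat" where
  "delj n j p i = (if i < j then p i else if i \<le> n then p (Suc i) else i)"

definition insj :: "nat \<Rightarrow> nat \<Rightarrow> (nat \<Rightarrow> nat) \<Rightarrow> nat \<Rightarrow> nat" where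
  "insj n j s i = (if i < j then s i else if i = j then Suc n else if i \<le> Suc n then s (i - 1) else i)"

lemma perm_facts:
  assumes "p permutes {1..n}"
  shows "\<And>x. x \<in> {1..n} \<Longrightarrow> p x \<in> {1..n}" "\<And>x. x \<notin> {1..n} \<Longrightarrow> p x = x"
    "\<And>x y. p x = p y \<longleftrightarrow> x = y"
  using permutes_in_image[OF assms] permutes_not_in[OF assms] permutes_inj[OF assms] by (auto simp: inj_eq)

lemma ins_perm:
  assumes s: "s permutes {1..n}" and j: "1 \<le> j" "j \<le> n"
  shows "insj n j s permutes {1..Suc n}"
proof (rule perm_of_inj)
  note f = perm_facts[OF s]
  show "\<And>x. x \<notin> {1..Suc n} \<Longrightarrow> insj n j s x = x"
    using j f by (auto simp: insj_def)
  show "insj n j s ` {1..Suc n} \<subseteq> {1..Suc n}"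
  proof
    fix y assume "y \<in> insj n j s ` {1..Suc n}"
    then obtain x where x: "x \<in> {1..Suc n}" "y = insj n j s x" by auto
    show "y \<in> {1..Suc n}"
    proof (cases "x < j")
      case True then show ?thesis using x j f(1)[of x] by (auto simp: insj_def)
    next
      case False
      show ?thesis
      proof (cases "x = j")
        case True then show ?thesis using x j by (auto simp: insj_def)
      next
        case False
        then have "x - 1 \<in> {1..n}" using \<open>\<not> x < j\<close> x j by auto
        then show ?thesis using x \<open>\<not> x < j\<close> False f(1)[of "x-1"] by (auto simp: insj_def)
      qed
    qed
  qed
  show "inj_on (insj n j s) {1..Suc n}"
  proof (rule inj_onI)
    fix a b assume a: "a \<in> {1..Suc n}" and b: "b \<in> {1..Suc n}" and e: "insj n j s a = insj n j s b"
    have ra: "s a \<in> {1..n}" if "a < j" using that a j f(1) by auto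
    have rb: "s b \<in> {1..n}" if "b < j" using that b j f(1) by auto
    have ra': "s (a-1) \<in> {1..n}" if "a > j" by (rule f(1)) (use that a j in auto)
    have rb': "s (b-1) \<in> {1..n}" if "b > j" by (rule f(1)) (use that b j in auto)
    show "a = b" using e a b ra rb ra' rb' f(3) by (auto simp: insj_def split: if_splits)
  qed
qed simp

lemma del_perm:
  assumes p: "p permutes {1..Suc n}" and pj: "p j = Suc n" and j: "1 \<le> j" "j \<le> n"
  shows "delj n j p permutes {1..n}"
proof (rule perm_of_inj)
  note f = perm_facts[OF p]
  show "\<And>x. x \<notin> {1..n} \<Longrightarrow> delj n j p x = x"
  proof -
    fix x assume "x \<notin> {1..n}"
    then show "delj n j p x = x"
      using j f(2)[of 0] by (cases "x = 0") (auto simp: delj_def)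
  qed
  show "delj n j p ` {1..n} \<subseteq> {1..n}"
  proof
    fix y assume "y \<in> delj n j p ` {1..n}"
    then obtain x where x: "x \<in> {1..n}" "y = delj n j p x" by auto
    show "y \<in> {1..n}"
    proof (cases "x < j")
      case True
      have "p x \<in> {1..Suc n}" by (rule f(1)) (use x in auto)
      moreover have "p x \<noteq> Suc n" using pj f(3)[of x j] True by auto
      ultimately show ?thesis using True x by (auto simp: delj_def)
    next
      case False
      have "p (Suc x) \<in> {1..Suc n}" by (rule f(1)) (use x in auto)
      moreover have "p (Suc x) \<noteq> Suc n" using pj f(3)[of "Suc x" j] False by auto
      ultimately show ?thesis using False x by (auto simp: delj_def)
    qed
  qed
  show "inj_on (delj n j p) {1..n}"
    using f(3) by (auto simp: inj_on_def delj_def split: if_splits)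
qed simp

lemma ins_del:
  assumes p: "p permutes {1..Suc n}" and pj: "p j = Suc n" and j: "1 \<le> j" "j \<le> n"
  shows "insj n j (delj n j p) = p"
proof
  fix i
  note f = perm_facts[OF p]
  show "insj n j (delj n j p) i = p i"
    using f(2)[of i] pj j by (auto simp: insj_def delj_def)
qed

lemma del_ins:
  assumes s: "s permutes {1..n}" and j: "1 \<le> j" "j \<le> n"
  shows "delj n j (insj n j s) = s"
proof
  fix i
  note f = perm_facts[OF s]
  show "delj n j (insj n j s) i = s i"
    using f(2)[of i] j by (auto simp: insj_def delj_def)
qed

definition F :: "nat \<Rightarrow> nat set \<Rightarrow> nat set" where
  "F j D = {i \<in> D. Suc i < j} \<union> {j} \<union> Suc ` {i \<in> D. j \<le> i}"

lemma Des_ins: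
  assumes s: "s permutes {1..n}" and j: "1 \<le> j" "j \<le> n"
  shows "Des (Suc n) (insj n j s) = F j (Des n s)"
proof (rule set_eqI)
  fix i
  note f = perm_facts[OF s]
  show "i \<in> Des (Suc n) (insj n j s) \<longleftrightarrow> i \<in> F j (Des n s)"
  proof (cases "Suc i < j")
    case True
    then show ?thesis using j by (auto simp: insj_def Des_def F_def)
  next
    case c1: False
    show ?thesis
    proof (cases "Suc i = j")
      case True
      have "s i \<in> {1..n}" if "i \<ge> 1" by (rule f(1)) (use that True j in auto)
      then show ?thesis using True j by (auto simp: insj_def Des_def F_def)
    next
      case c2: False
      show ?thesis
      proof (cases "i = j")
        case True
        have "s i \<in> {1..n}" by (rule f(1)) (use True j in auto)
        then show ?thesis using True j by (auto simp: insj_def Des_def F_def)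
      next
        case False
        then have ij: "i > j" using c1 c2 by auto
        then obtain k where k: "i = Suc k" "k \<ge> j" by (cases i) auto
        show ?thesis using k j by (auto simp: insj_def Des_def F_def)
      qed
    qed
  qed
qed

lemma Ikh_lo: "y < j - 1 \<Longrightarrow> y \<in> Ik_hat I j \<longleftrightarrow> y \<in> I"
  unfolding Ik_hat_def by auto
lemma Ik_lo: "0 \<notin> I \<Longrightarrow> y < j - 1 \<Longrightarrow> y \<in> Ik I j \<longleftrightarrow> y \<in> I"
  by (cases "y = 0") (auto simp: Ik_def)
lemma Ikh_hi: "j \<le> y \<Longrightarrow> y \<in> Ik_hat I j \<longleftrightarrow> Suc y \<in> I"
  unfolding Ik_hat_def by force
lemma Ik_hi: "1 \<le> j \<Longrightarrow> j \<le> y \<Longrightarrow> y \<in> Ik I j \<longleftrightarrow> Suc y \<in> I"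
  unfolding Ik_def by force
lemma Ikh_mid: "j - 1 \<notin> I \<Longrightarrow> 1 \<le> j \<Longrightarrow> j - 1 \<notin> Ik_hat I j"
  unfolding Ik_hat_def by auto
lemma Ik_mid: "j \<in> I \<Longrightarrow> 2 \<le> j \<Longrightarrow> j - 1 \<in> Ik I j"
  unfolding Ik_def by auto

lemma F_mem:
  assumes "1 \<le> j"
  shows "y \<in> F j D \<longleftrightarrow> (y < j - 1 \<and> y \<in> D) \<or> y = j \<or> (y > j \<and> y - 1 \<in> D)"
  using assms by (cases y) (auto simp: F_def)

lemma F_iff:
  assumes I0: "0 \<notin> I" and D0: "0 \<notin> D" and j: "1 \<le> j"
  shows "F j D = I \<longleftrightarrow> j \<in> I' I \<and> (D = Ik_hat I j \<or> (j \<in> I'' I \<and> D = Ik I j))"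
proof
  assume e: "F j D = I"
  have m: "y \<in> I \<longleftrightarrow> (y < j - 1 \<and> y \<in> D) \<or> y = j \<or> (y > j \<and> y - 1 \<in> D)" for y
    using F_mem[OF j, of y D] e by simp
  have jI: "j \<in> I" using m by simp
  have j1: "j - 1 \<notin> I" using m[of "j-1"] j by auto
  have lo: "y \<in> D \<longleftrightarrow> y \<in> I" if "y < j - 1" for y using m[of y] that by auto
  have hi: "y \<in> D \<longleftrightarrow> Suc y \<in> I" if "j \<le> y" for y using m[of "Suc y"] that by auto
  show "j \<in> I' I \<and> (D = Ik_hat I j \<or> (j \<in> I'' I \<and> D = Ik I j))"
  proof (cases "j - 1 \<in> D")
    case False
    have "y \<in> D \<longleftrightarrow> y \<in> Ik_hat I j" for y
    proof -
      consider "y < j - 1" | "y = j - 1" | "j \<le> y" by linarith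
      then show ?thesis
        by cases (use lo Ikh_lo hi Ikh_hi Ikh_mid[OF j1 j] False in auto)
    qed
    then have "D = Ik_hat I j" by blast
    then show ?thesis using jI j1 by (simp add: I'_def)
  next
    case True
    then have j2: "2 \<le> j" using D0 j by (cases "j = 1") auto
    have "y \<in> D \<longleftrightarrow> y \<in> Ik I j" for y
    proof -
      consider "y < j - 1" | "y = j - 1" | "j \<le> y" by linarith
      then show ?thesis
        by cases (use lo Ik_lo[OF I0] hi Ik_hi[OF j] Ik_mid[OF jI j2] True in auto)
    qed
    then have "D = Ik I j" by blast
    then show ?thesis using jI j1 j2 by (simp add: I'_def I''_def)
  qed
next
  assume h: "j \<in> I' I \<and> (D = Ik_hat I j \<or> (j \<in> I'' I \<and> D = Ik I j))"
  then have jI: "j \<in> I" and j1: "j - 1 \<notin> I" by (auto simp: I'_def)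
  have lo: "y \<in> D \<longleftrightarrow> y \<in> I" if y: "y < j - 1" for y
    using h Ikh_lo[OF y] Ik_lo[OF I0 y] by auto
  have hi: "y \<in> D \<longleftrightarrow> Suc y \<in> I" if y: "j \<le> y" for y
    using h Ikh_hi[OF y] Ik_hi[OF j y] by auto
  have "y \<in> F j D \<longleftrightarrow> y \<in> I" for y
  proof -
    consider "y < j - 1" | "y = j - 1" | "y = j" | "j < y" by linarith
    then show ?thesis
    proof cases
      case 1 then show ?thesis using F_mem[OF j, of y D] lo[OF 1] by auto
    next
      case 2 then show ?thesis using F_mem[OF j, of y D] j1 j by auto
    next
      case 3 then show ?thesis using F_mem[OF j, of y D] jI by auto
    next
      case 4 then show ?thesis using F_mem[OF j, of y D] hi[of "y - 1"] by auto
    qed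
  qed
  then show "F j D = I" by blast
qed

lemma ins_j: "insj n j s j = Suc n" by (simp add: insj_def)

lemma card_Aj:
  assumes I0: "0 \<notin> I" and j: "1 \<le> j" "j \<le> n"
  shows "card {p. p permutes {1..Suc n} \<and> Des (Suc n) p = I \<and> p j = Suc n}
    = (if j \<in> I' I then d (Ik_hat I j) n + (if j \<in> I'' I then d (Ik I j) n else 0) else 0)"
proof -
  define A where "A = {p. p permutes {1..Suc n} \<and> Des (Suc n) p = I \<and> p j = Suc n}"
  define B where "B = {s. s permutes {1..n} \<and> F j (Des n s) = I}"
  have "bij_betw (delj n j) A B"
  proof (rule bij_betw_byWitness[where f' = "insj n j"])
    show "\<forall>a\<in>A. insj n j (delj n j a) = a" using ins_del j by (auto simp: A_def)
    show "\<forall>a\<in>B. delj n j (insj n j a) = a" using del_ins j by (auto simp: B_def)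
    show "delj n j ` A \<subseteq> B"
    proof
      fix x assume "x \<in> delj n j ` A"
      then obtain p where p: "p \<in> A" "x = delj n j p" by auto
      have pp: "p permutes {1..Suc n}" "Des (Suc n) p = I" "p j = Suc n" using p(1) by (auto simp: A_def)
      have xp: "x permutes {1..n}" using del_perm[OF pp(1) pp(3) j] p(2) by simp
      have "F j (Des n x) = Des (Suc n) (insj n j x)" using Des_ins[OF xp j] by simp
      also have "insj n j x = p" using ins_del[OF pp(1) pp(3) j] p(2) by simp
      finally show "x \<in> B" using xp pp(2) by (simp add: B_def)
    qed
    show "insj n j ` B \<subseteq> A"
      using ins_perm[OF _ j] Des_ins[OF _ j] ins_j by (auto simp: A_def B_def)
  qed
  then have cAB: "card A = card B" by (rule bij_betw_same_card)
  have D0: "0 \<notin> Des n s" for s by (simp add: Des_def)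
  have B: "B = {s. s permutes {1..n} \<and> (j \<in> I' I \<and> (Des n s = Ik_hat I j \<or> (j \<in> I'' I \<and> Des n s = Ik I j)))}"
    unfolding B_def using F_iff[OF I0 D0 j(1)] by blast
  have fin: "finite {s. s permutes {1..n}}" by (rule finite_permutations) simp
  show ?thesis
  proof (cases "j \<in> I' I")
    case False
    then have "B = {}" using B by simp
    then show ?thesis using cAB False by (simp add: A_def)
  next
    case True
    note jI' = True
    show ?thesis
    proof (cases "j \<in> I'' I")
      case False
      then have "B = {s. s permutes {1..n} \<and> Des n s = Ik_hat I j}" using B jI' by auto
      then show ?thesis using cAB jI' False by (simp add: A_def d_def)
    next
      case True
      have j2: "2 \<le> j" using True j by (auto simp: I''_def)
      have jI: "j \<in> I" "j - 1 \<notin> I" using jI' by (auto simp: I'_def)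
      have ne: "Ik_hat I j \<noteq> Ik I j" using Ikh_mid[OF jI(2) j(1)] Ik_mid[OF jI(1) j2] by auto
      have "B = {s. s permutes {1..n} \<and> Des n s = Ik_hat I j} \<union> {s. s permutes {1..n} \<and> Des n s = Ik I j}"
        using B jI' True by auto
      moreover have "card (\<dots>) = d (Ik_hat I j) n + d (Ik I j) n"
        unfolding d_def using ne
        by (intro card_Un_disjoint) (auto intro: finite_subset[OF _ fin])
      ultimately show ?thesis using cAB jI' True by (simp add: A_def)
    qed
  qed
qed

lemma Des_Suc: "p (Suc n) = Suc n \<Longrightarrow> p n \<le> n \<Longrightarrow> Des (Suc n) p = Des n p"
  unfolding Des_def by (auto simp: less_Suc_eq)

lemma card_Alast:
  assumes n: "1 \<le> n"
  shows "card {p. p permutes {1..Suc n} \<and> Des (Suc n) p = I \<and> p (Suc n) = Suc n} = d I n"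
proof -
  have "{p. p permutes {1..Suc n} \<and> Des (Suc n) p = I \<and> p (Suc n) = Suc n}
      = {p. p permutes {1..n} \<and> Des n p = I}"
  proof (rule set_eqI, rule iffI)
    fix p assume "p \<in> {p. p permutes {1..Suc n} \<and> Des (Suc n) p = I \<and> p (Suc n) = Suc n}"
    then have p: "p permutes {1..Suc n}" "Des (Suc n) p = I" "p (Suc n) = Suc n" by auto
    note f = perm_facts[OF p(1)]
    have "p n \<in> {1..Suc n}" by (rule f(1)) (use n in auto)
    moreover have "p n \<noteq> Suc n" using p(3) f(3)[of n "Suc n"] by auto
    ultimately have "p n \<le> n" by auto
    then have "Des n p = I" using Des_Suc[of p n, OF p(3)] p(2) by simp
    moreover have "p permutes {1..n}"
    proof (rule permutes_superset[OF p(1)])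
      fix x assume "x \<in> {1..Suc n} - {1..n}"
      then have "x = Suc n" by auto
      then show "p x = x" using p(3) by simp
    qed
    ultimately show "p \<in> {p. p permutes {1..n} \<and> Des n p = I}" by simp
  next
    fix p assume "p \<in> {p. p permutes {1..n} \<and> Des n p = I}"
    then have p: "p permutes {1..n}" "Des n p = I" by auto
    note f = perm_facts[OF p(1)]
    have ps: "p (Suc n) = Suc n" using f(2) by simp
    have "p n \<in> {1..n}" by (rule f(1)) (use n in auto)
    then have "Des (Suc n) p = I" using Des_Suc[of p n, OF ps] p(2) by simp
    moreover have "p permutes {1..Suc n}" by (rule permutes_subset[OF p(1)]) auto
    ultimately show "p \<in> {p. p permutes {1..Suc n} \<and> Des (Suc n) p = I \<and> p (Suc n) = Suc n}"
      using ps by simp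
  qed
  then show ?thesis by (simp add: d_def)
qed

theorem theorem2p4:
  fixes I :: "nat set" and n :: nat
  assumes "finite I" and "I \<noteq> {}" and "0 \<notin> I" and "n > Max I"
  shows "d I (Suc n) = d I n + (\<Sum>x\<in>I'' I. d (Ik I x) n) + (\<Sum>x\<in>I' I. d (Ik_hat I x) n)"
  proof -
  define A where "A j = {p. p permutes {1..Suc n} \<and> Des (Suc n) p = I \<and> p j = Suc n}" for j
  have n1: "1 \<le> n" using assms(4) by auto
  have Isub: "I \<subseteq> {1..n}"
  proof
    fix x assume x: "x \<in> I"
    then have "x \<le> Max I" using assms(1) by simp
    then show "x \<in> {1..n}" using x assms(3,4) by (cases x) auto
  qed
  have I'sub: "I' I \<subseteq> {1..n}" using Isub by (auto simp: I'_def)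
  have I''sub: "I'' I \<subseteq> I' I" by (auto simp: I''_def)
  have S: "{p. p permutes {1..Suc n} \<and> Des (Suc n) p = I} = (\<Union>j\<in>{1..Suc n}. A j)"
  proof (rule set_eqI, rule iffI)
    fix p assume "p \<in> {p. p permutes {1..Suc n} \<and> Des (Suc n) p = I}"
    then have p: "p permutes {1..Suc n}" "Des (Suc n) p = I" by auto
    then obtain j where "p j = Suc n" unfolding permutes_def by metis
    moreover have "j \<in> {1..Suc n}"
    proof (rule ccontr)
      assume "j \<notin> {1..Suc n}"
      then have "p j = j" using permutes_not_in[OF p(1)] by simp
      then show False using \<open>p j = Suc n\<close> \<open>j \<notin> {1..Suc n}\<close> by auto
    qed
    ultimately show "p \<in> (\<Union>j\<in>{1..Suc n}. A j)" using p by (auto simp: A_def)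
  qed (auto simp: A_def)
  have fin: "finite {p. p permutes {1..Suc n}}" by (rule finite_permutations) simp
  have "d I (Suc n) = (\<Sum>j\<in>{1..Suc n}. card (A j))"
    unfolding d_def S
  proof (rule card_UN_disjoint)
    show "\<forall>i\<in>{1..Suc n}. finite (A i)" by (auto simp: A_def intro: finite_subset[OF _ fin])
    show "\<forall>i\<in>{1..Suc n}. \<forall>j\<in>{1..Suc n}. i \<noteq> j \<longrightarrow> A i \<inter> A j = {}"
      by (auto simp: A_def) (metis injD permutes_inj)
  qed simp
  also have "\<dots> = card (A (Suc n)) + (\<Sum>j\<in>{1..n}. card (A j))"
    by (simp add: add.commute)
  also have "card (A (Suc n)) = d I n" unfolding A_def by (rule card_Alast[OF n1])
  also have "(\<Sum>j\<in>{1..n}. card (A j)) = (\<Sum>j\<in>{1..n}. (if j \<in> I'' I then d (Ik I j) n else 0)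
       + (if j \<in> I' I then d (Ik_hat I j) n else 0))"
  proof (rule sum.cong)
    fix j assume "j \<in> {1..n}"
    then show "card (A j) = (if j \<in> I'' I then d (Ik I j) n else 0) + (if j \<in> I' I then d (Ik_hat I j) n else 0)"
      unfolding A_def using card_Aj[OF assms(3), of j n] I''sub by auto
  qed simp
  also have "\<dots> = (\<Sum>x\<in>I'' I. d (Ik I x) n) + (\<Sum>x\<in>I' I. d (Ik_hat I x) n)"
    unfolding sum.distrib sum.inter_restrict[symmetric, OF finite_atLeastAtMost]
    using I'sub I''sub by (simp add: Int_absorb1 inf.absorb2)
  finally show ?thesis by simp
qed

end
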